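(* Let $A$ be a finite non-empty alphabet and $\mathbf a,\mathbf b,\mathbf c,\mathbf d\in A^+$. If $\mathbf a:\mathbf b::_{SY}\mathbf c:\mathbf d$, then $\mathbf a:\mathbf b::\mathbf c:\mathbf d$ holds in $(A^+,\cdot,A^+)$.
   Context: $A^+$ is the set of non-empty finite words over $A$. $\mathbf a:\mathbf b::_{SY}\mathbf c:\mathbf d$ means: $\mathbf a=a_1\ldots a_n$, $\mathbf b=b_1\ldots b_n$, $\mathbf c=c_1\ldots c_n$, $\mathbf d=d_1\ldots d_n$ for some letters $a_i,b_i,c_i,d_i\in A$ and $n\ge0$ such that for every $1\le i\le n$, ($a_i=b_i$ and $c_i=d_i$) or ($a_i=c_i$ and $b_i=d_i$). $(A^+,\cdot,A^+)$ is the algebra with universe $A^+$, concatenation, and every non-empty word as a constant. Terms are built from a denumerable variable set, concatenation and these constants; $X(s)$ is the set of variables of $s$. A justification is a pair $s\to t$ with $X(t)\subseteq X(s)$. $\uparrow(\mathbf a\to\mathbf b)$ is the set of justifications $s\to t$ with $\mathbf a=s(\mathbf o)$, $\mathbf b=t(\mathbf o)$ for some tuple $\mathbf o$ over $A^+$; $\uparrow(\mathbf a\to\mathbf b:\!\cdot\,\mathbf c\to\mathbf d):=\uparrow(\mathbf a\to\mathbf b)\cap\uparrow(\mathbf c\to\mathbf d)$. A justification is trivial if it lies in all sets $\uparrow(\mathbf a'\to\mathbf b':\!\cdot\,\mathbf c'\to\mathbf d')$. $\mathbf a\to\mathbf b:\!\cdot\,\mathbf c\to\mathbf d$ holds iff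 either (i) all justifications in $\uparrow(\mathbf a\to\mathbf b)\cup\uparrow(\mathbf c\to\mathbf d)$ are trivial, or (ii) $J_{\mathbf d}:=\uparrow(\mathbf a\to\mathbf b:\!\cdot\,\mathbf c\to\mathbf d)$ contains a non-trivial justification and for every $\mathbf d'$, $J_{\mathbf d}\subseteq J_{\mathbf d'}$ implies $J_{\mathbf d'}$ contains a non-trivial justification and $J_{\mathbf d'}\subseteq J_{\mathbf d}$ (ignoring trivial justifications). $\mathbf a:\mathbf b::\mathbf c:\mathbf d$ iff $\mathbf a\to\mathbf b:\!\cdot\,\mathbf c\to\mathbf d$, $\mathbf b\to\mathbf a:\!\cdot\,\mathbf d\to\mathbf c$, $\mathbf c\to\mathbf d:\!\cdot\,\mathbf a\to\mathbf b$, $\mathbf d\to\mathbf c:\!\cdot\,\mathbf b\to\mathbf a$ all hold. *)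

theory Defs
  imports Main
begin

text \<open>Terms over the algebra (A^+, concatenation, A^+): variables, constants
 (non-empty words) and concatenation. The alphabet A is the (finite) type 'a.\<close>

datatype 'a wterm = V nat | C "'a list" | Cat "'a wterm" "'a wterm"

fun wf_term :: "'a wterm \<Rightarrow> bool" where
  "wf_term (V x) = True"
| "wf_term (C w) = (w \<noteq> [])"
| "wf_term (Cat s t) = (wf_term s \<and> wf_term t)"

fun tvars :: "'a wterm \<Rightarrow> nat set" where
  "tvars (V x) = {x}"
| "tvars (C w) = {}"
| "tvars (Cat s t) = tvars s \<union> tvars t"

fun teval :: "(nat \<Rightarrow> 'a list) \<Rightarrow> 'a wterm \<Rightarrow> 'a list" where
  "teval \<sigma> (V x) = \<sigma> x"
| "teval \<sigma> (C w) = w"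
| "teval \<sigma> (Cat s t) = teval \<sigma> s @ teval \<sigma> t"

definition is_just :: "'a wterm \<times> 'a wterm \<Rightarrow> bool" where
  "is_just j = (wf_term (fst j) \<and> wf_term (snd j) \<and> tvars (snd j) \<subseteq> tvars (fst j))"

definition up :: "'a list \<Rightarrow> 'a list \<Rightarrow> ('a wterm \<times> 'a wterm) set" where
  "up a b = {(s, t). is_just (s, t) \<and>
     (\<exists>\<sigma>. (\<forall>x. \<sigma> x \<noteq> []) \<and> teval \<sigma> s = a \<and> teval \<sigma> t = b)}"

definition up2 :: "'a list \<Rightarrow> 'a list \<Rightarrow> 'a list \<Rightarrow> 'a list \<Rightarrow> ('a wterm \<times> 'a wterm) set" where
  "up2 a b c d = up a b \<inter> up c d"

definition trivial_just :: "'a wterm \<times> 'a wterm \<Rightarrow> bool" where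
  "trivial_just j = (\<forall>a' b' c' d'. a' \<noteq> [] \<and> b' \<noteq> [] \<and> c' \<noteq> [] \<and> d' \<noteq> []
       \<longrightarrow> j \<in> up2 a' b' c' d')"

definition nontriv :: "('a wterm \<times> 'a wterm) set \<Rightarrow> ('a wterm \<times> 'a wterm) set" where
  "nontriv J = {j \<in> J. \<not> trivial_just j}"

definition arrow_prop :: "'a list \<Rightarrow> 'a list \<Rightarrow> 'a list \<Rightarrow> 'a list \<Rightarrow> bool" where
  "arrow_prop a b c d =
    ((\<forall>j \<in> up a b \<union> up c d. trivial_just j) \<or>
     (nontriv (up2 a b c d) \<noteq> {} \<and>
      (\<forall>d'. d' \<noteq> [] \<longrightarrow> nontriv (up2 a b c d) \<subseteq> nontriv (up2 a b c d') \<longrightarrow>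
          nontriv (up2 a b c d') \<noteq> {} \<and> nontriv (up2 a b c d') \<subseteq> nontriv (up2 a b c d))))"

definition analogy :: "'a list \<Rightarrow> 'a list \<Rightarrow> 'a list \<Rightarrow> 'a list \<Rightarrow> bool" where
  "analogy a b c d = (arrow_prop a b c d \<and> arrow_prop b a d c \<and>
                      arrow_prop c d a b \<and> arrow_prop d c b a)"

definition sy_analogy :: "'a list \<Rightarrow> 'a list \<Rightarrow> 'a list \<Rightarrow> 'a list \<Rightarrow> bool" where
  "sy_analogy a b c d = (length b = length a \<and> length c = length a \<and> length d = length a \<and>
     (\<forall>i < length a. (a ! i = b ! i \<and> c ! i = d ! i) \<or> (a ! i = c ! i \<and> b ! i = d ! i)))"

end

theory Submission
  imports Defs
begin

fun catl :: "'a wterm list \<Rightarrow> 'a wterm" where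
  "catl [] = C []"
| "catl [x] = x"
| "catl (x # y # ys) = Cat x (catl (y # ys))"

lemma teval_catl: "ts \<noteq> [] \<Longrightarrow> teval \<sigma> (catl ts) = concat (map (teval \<sigma>) ts)"
  by (induction ts rule: catl.induct) auto

lemma tvars_catl: "ts \<noteq> [] \<Longrightarrow> tvars (catl ts) = \<Union> (tvars ` set ts)"
  by (induction ts rule: catl.induct) auto

lemma wf_catl: "ts \<noteq> [] \<Longrightarrow> wf_term (catl ts) = (\<forall>t\<in>set ts. wf_term t)"
  by (induction ts rule: catl.induct) auto

lemma sum_ge: "\<forall>i\<in>set l. g i \<ge> (1::nat) \<Longrightarrow> sum_list (map g l) \<ge> length l"
  by (induction l) (auto simp: add_mono)

lemma sum_eq: "\<forall>i\<in>set l. g i \<ge> (1::nat) \<Longrightarrow> sum_list (map g l) = length l \<Longrightarrow> \<forall>i\<in>set l. g i = 1"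
proof (induction l)
  case Nil then show ?case by simp
next
  case (Cons x l)
  have "sum_list (map g l) \<ge> length l" using Cons.prems(1) sum_ge[of l g] by auto
  moreover have "g x \<ge> 1" using Cons.prems by auto
  ultimately have "g x = 1" "sum_list (map g l) = length l" using Cons.prems(2) by auto
  then show ?case using Cons by auto
qed

lemma concat_single: "\<forall>i\<in>set l. length (f i) = 1 \<Longrightarrow> concat (map f l) = map (\<lambda>i. hd (f i)) l"
proof (induction l)
  case Nil then show ?case by simp
next
  case (Cons x l)
  have "f x = [hd (f x)]" using Cons.prems by (cases "f x") auto
  then show ?case using Cons by (metis concat.simps(2) list.set_intros(2) list.simps(9) append_Cons append_Nil)
qed

lemma key:
  assumes ne: "\<forall>x. \<sigma> x \<noteq> []" and ev: "teval \<sigma> (catl (map ps [0..<n])) = w" and n: "n > 0"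
    and sh: "\<forall>i<n. ps i = V i \<or> (\<exists>x. ps i = C [x])"
  shows "length w \<ge> n" and "length w = n \<Longrightarrow> \<forall>i<n. teval \<sigma> (ps i) = [w ! i]"
proof -
  have w: "w = concat (map (\<lambda>i. teval \<sigma> (ps i)) [0..<n])"
    using ev n by (simp add: teval_catl comp_def)
  have lw: "length w = sum_list (map (\<lambda>i. length (teval \<sigma> (ps i))) [0..<n])"
    unfolding w by (simp add: length_concat comp_def)
  have ge: "\<forall>i\<in>set [0..<n]. length (teval \<sigma> (ps i)) \<ge> 1"
  proof
    fix i assume "i \<in> set [0..<n]"
    then have "i < n" by simp
    then consider "ps i = V i" | x where "ps i = C [x]" using sh by blast
    then show "length (teval \<sigma> (ps i)) \<ge> 1"
      by cases (use ne in \<open>auto simp: Suc_le_eq\<close>)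
  qed
  show "length w \<ge> n" using sum_ge[OF ge] lw by simp
  assume "length w = n"
  then have one: "\<forall>i\<in>set [0..<n]. length (teval \<sigma> (ps i)) = 1"
    using sum_eq[OF ge] lw by simp
  have w2: "w = map (\<lambda>i. hd (teval \<sigma> (ps i))) [0..<n]"
    unfolding w by (rule concat_single[OF one])
  show "\<forall>i<n. teval \<sigma> (ps i) = [w ! i]"
  proof (intro allI impI)
    fix i assume i: "i < n"
    have "length (teval \<sigma> (ps i)) = 1" using one i by simp
    then have "teval \<sigma> (ps i) = [hd (teval \<sigma> (ps i))]" by (cases "teval \<sigma> (ps i)") auto
    also have "hd (teval \<sigma> (ps i)) = w ! i" using i w2 by simp
    finally show "teval \<sigma> (ps i) = [w ! i]" .
  qed
qed

lemma arrow_lemma: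
  fixes a b c d :: "'a list"
  assumes an: "a \<noteq> []" and sy: "sy_analogy a b c d"
  shows "arrow_prop a b c d"
proof -
  define n where "n = length a"
  have n0: "n > 0" using an n_def by simp
  have lens: "length b = n" "length c = n" "length d = n" using sy n_def by (auto simp: sy_analogy_def)
  define P where "P i = (a!i = b!i \<and> c!i = d!i)" for i
  have syi: "\<And>i. i < n \<Longrightarrow> P i \<or> (a!i = c!i \<and> b!i = d!i)" using sy n_def P_def by (auto simp: sy_analogy_def)
  define ps where "ps i = (if P i then V i else C [a!i])" for i :: nat
  define pt where "pt i = (if P i then V i else C [b!i])" for i :: nat
  define S where "S = catl (map ps [0..<n])"
  define T where "T = catl (map pt [0..<n])"
  have ne: "map ps [0..<n] \<noteq> []" "map pt [0..<n] \<noteq> []" using n0 by auto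
  have sh: "\<forall>i<n. ps i = V i \<or> (\<exists>x. ps i = C [x])" by (auto simp: ps_def)
  have just: "is_just (S, T)"
    unfolding is_just_def S_def T_def using ne
    by (auto simp: wf_catl tvars_catl ps_def pt_def split: if_splits)
  have evT: "teval \<sigma> T = map (\<lambda>i. if P i then w ! i else b ! i) [0..<n]"
    if "\<forall>x. \<sigma> x \<noteq> []" "teval \<sigma> S = w" "length w = n" for \<sigma> w
  proof -
    have k: "\<forall>i<n. teval \<sigma> (ps i) = [w ! i]"
      using key(2)[of \<sigma> ps n w] that n0 sh unfolding S_def by blast
    have "teval \<sigma> T = concat (map (\<lambda>i. teval \<sigma> (pt i)) [0..<n])"
      unfolding T_def using ne by (simp add: teval_catl comp_def)
    also have "\<dots> = concat (map (\<lambda>i. [if P i then w ! i else b ! i]) [0..<n])"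
    proof (rule arg_cong[where f = concat], rule map_cong[OF refl])
      fix i assume "i \<in> set [0..<n]"
      then have i: "i < n" by simp
      show "teval \<sigma> (pt i) = [if P i then w ! i else b ! i]"
        using k i by (auto simp: pt_def ps_def split: if_splits)
    qed
    also have "\<dots> = map (\<lambda>i. if P i then w ! i else b ! i) [0..<n]"
      by (induction n) auto
    finally show ?thesis .
  qed
  have mapnth: "map (\<lambda>i. xs ! i) [0..<length xs] = xs" for xs :: "'a list"
    by (rule map_nth)
  have evTa: "teval (\<lambda>i. [a ! i]) T = b"
  proof -
    have sa: "teval (\<lambda>i. [a ! i]) S = a"
    proof -
      have "teval (\<lambda>i. [a ! i]) S = concat (map (\<lambda>i. teval (\<lambda>i. [a ! i]) (ps i)) [0..<n])"
        unfolding S_def using ne by (simp add: teval_catl comp_def)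
      also have "\<dots> = concat (map (\<lambda>i. [a ! i]) [0..<n])"
        by (rule arg_cong[where f = concat], rule map_cong) (auto simp: ps_def)
      also have "\<dots> = map (\<lambda>i. a ! i) [0..<n]" by (induction n) auto
      finally show ?thesis using mapnth[of a] n_def by simp
    qed
    have "teval (\<lambda>i. [a ! i]) T = map (\<lambda>i. if P i then a ! i else b ! i) [0..<n]"
      using evT[of "\<lambda>i. [a ! i]" a] sa n_def by simp
    also have "\<dots> = map (\<lambda>i. b ! i) [0..<n]" by (rule map_cong) (auto simp: P_def)
    finally show ?thesis using mapnth[of b] lens by simp
  qed
  have Sa: "teval (\<lambda>i. [a ! i]) S = a"
  proof -
    have "teval (\<lambda>i. [a ! i]) S = concat (map (\<lambda>i. teval (\<lambda>i. [a ! i]) (ps i)) [0..<n])"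
      unfolding S_def using ne by (simp add: teval_catl comp_def)
    also have "\<dots> = concat (map (\<lambda>i. [a ! i]) [0..<n])"
      by (rule arg_cong[where f = concat], rule map_cong) (auto simp: ps_def)
    also have "\<dots> = map (\<lambda>i. a ! i) [0..<n]" by (induction n) auto
    finally show ?thesis using mapnth[of a] n_def by simp
  qed
  have Sc: "teval (\<lambda>i. [c ! i]) S = c"
  proof -
    have "teval (\<lambda>i. [c ! i]) S = concat (map (\<lambda>i. teval (\<lambda>i. [c ! i]) (ps i)) [0..<n])"
      unfolding S_def using ne by (simp add: teval_catl comp_def)
    also have "\<dots> = concat (map (\<lambda>i. [c ! i]) [0..<n])"
      by (rule arg_cong[where f = concat], rule map_cong[OF refl]) (use syi in \<open>auto simp: ps_def P_def\<close>)
    also have "\<dots> = map (\<lambda>i. c ! i) [0..<n]" by (induction n) auto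
    finally show ?thesis using mapnth[of c] lens by simp
  qed
  have Td: "teval \<sigma> T = d" if "\<forall>x. \<sigma> x \<noteq> []" "teval \<sigma> S = c" for \<sigma>
  proof -
    have "teval \<sigma> T = map (\<lambda>i. if P i then c ! i else b ! i) [0..<n]"
      using evT[of \<sigma> c] that lens by simp
    also have "\<dots> = map (\<lambda>i. d ! i) [0..<n]" by (rule map_cong[OF refl]) (use syi in \<open>auto simp: P_def\<close>)
    finally show ?thesis using mapnth[of d] lens by simp
  qed
  have Tc: "teval (\<lambda>i. [c ! i]) T = d" using Td Sc by simp
  have inJ: "(S, T) \<in> up2 a b c d"
    unfolding up2_def up_def using just evTa Sa Tc Sc
    by auto
  have nt: "\<not> trivial_just (S, T)"
  proof
    assume "trivial_just (S, T)"
    then obtain x0 where "True" by simp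
    have "(S, T) \<in> up [a!0] [a!0, a!0]"
      using \<open>trivial_just (S, T)\<close> unfolding trivial_just_def up2_def by blast
    then obtain \<sigma> where s: "\<forall>x. \<sigma> x \<noteq> []" "teval \<sigma> S = [a!0]" "teval \<sigma> T = [a!0, a!0]"
      unfolding up_def by auto
    have "length [a!0] \<ge> n" using key(1)[of \<sigma> ps n "[a!0]"] s n0 sh unfolding S_def by blast
    then have n1: "n = 1" using n0 by simp
    have "teval \<sigma> T = map (\<lambda>i. if P i then [a!0] ! i else b ! i) [0..<n]"
      using evT[of \<sigma> "[a!0]"] s n1 by simp
    then show False using s(3) n1 by simp
  qed
  have NT: "(S, T) \<in> nontriv (up2 a b c d)" using inJ nt unfolding nontriv_def by simp
  show ?thesis
    unfolding arrow_prop_def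
  proof (rule disjI2, intro conjI allI impI)
    show "nontriv (up2 a b c d) \<noteq> {}" using NT by blast
    fix d' :: "'a list"
    assume "d' \<noteq> []" and sub: "nontriv (up2 a b c d) \<subseteq> nontriv (up2 a b c d')"
    then have "(S, T) \<in> up c d'" using NT unfolding nontriv_def up2_def by blast
    then obtain \<sigma> where "\<forall>x. \<sigma> x \<noteq> []" "teval \<sigma> S = c" "teval \<sigma> T = d'"
      unfolding up_def by auto
    then have "d' = d" using Td by metis
    then show "nontriv (up2 a b c d') \<noteq> {}" "nontriv (up2 a b c d') \<subseteq> nontriv (up2 a b c d)"
      using NT by auto
  qed
qed

theorem mainTheorem16:
  fixes a b c d :: "'a::finite list"
  assumes "a \<noteq> []" and "b \<noteq> []" and "c \<noteq> []" and "d \<noteq> []"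
    and "sy_analogy a b c d"
  shows "analogy a b c d"
proof -
  have s2: "sy_analogy b a d c" "sy_analogy c d a b" "sy_analogy d c b a"
    using assms(5) unfolding sy_analogy_def by auto
  show ?thesis unfolding analogy_def
    using arrow_lemma[OF assms(1) assms(5)] arrow_lemma[OF assms(2) s2(1)]
      arrow_lemma[OF assms(3) s2(2)] arrow_lemma[OF assms(4) s2(3)] by blast
qed

end
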